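(* Let $a_2,a_3$ be integers with $1<a_2<a_3$, $A=\{1,a_2,a_3\}$, and let $SG(A,n,p)$ be a stride generator. Then there exists an integer $x$ with $a_3-a_2\le x<a_3$ which has no $n$-generation of order $<p$ (i.e. $x$ is covered only by threads of order $p$ among threads of order $\le p$).
   Context: For integers $n$ and $i\ge 0$, an integer $x$ has an $n$-generation of order $i$ if there are integers $c_1,c_2\ge 0$ with $x+ia_3=c_2a_2+c_1$ and $c_1+c_2\le n+i$. For integers $n$ and $p\ge0$, $SG(A,n,p)$ is a stride generator if: (A) every integer $0\le x<a_3$ has an $n$-generation of some order $\le p$; (B) at least one integer $0\le x<a_3$ has no $n$-generation of order $<p$; (C) at least one integer $0\le y<a_3$ has no $(n-1)$-generation of any order $\le p+1$. A thread of order $i$ is an integer interval $[ea_2-ia_3,\, ea_2-ia_3+(n+i)-e]$ with integers $e\ge0$, $n+i-e\ge0$; $x$ has an $n$-generation of order $i$ iff $x$ lies in some thread of order $i$. *)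

theory Defs
  imports Main
begin

definition has_gen :: "int \<Rightarrow> int \<Rightarrow> int \<Rightarrow> nat \<Rightarrow> int \<Rightarrow> bool" where
  "has_gen a2 a3 n i x \<longleftrightarrow>
     (\<exists>c1 c2::int. c1 \<ge> 0 \<and> c2 \<ge> 0 \<and> x + int i * a3 = c2 * a2 + c1 \<and> c1 + c2 \<le> n + int i)"

definition stride_generator :: "int \<Rightarrow> int \<Rightarrow> int \<Rightarrow> nat \<Rightarrow> bool" where
  "stride_generator a2 a3 n p \<longleftrightarrow>
     (\<forall>x. 0 \<le> x \<and> x < a3 \<longrightarrow> (\<exists>i\<le>p. has_gen a2 a3 n i x)) \<and>
     (\<exists>x. 0 \<le> x \<and> x < a3 \<and> \<not> (\<exists>i<p. has_gen a2 a3 n i x)) \<and>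
     (\<exists>y. 0 \<le> y \<and> y < a3 \<and> \<not> (\<exists>i\<le>p + 1. has_gen a2 a3 (n - 1) i y))"

end

theory Submission
  imports Defs
begin

lemma shift_gen:
  assumes "has_gen a2 a3 n i (x + a2)" "0 \<le> x" "0 \<le> a3" "0 \<le> a2"
  shows "has_gen a2 a3 n i x"
proof -
  from assms(1) obtain c1 c2 where h: "c1 \<ge> 0" "c2 \<ge> 0" "x + a2 + int i * a3 = c2 * a2 + c1"
    "c1 + c2 \<le> n + int i" unfolding has_gen_def by blast
  show ?thesis
  proof (cases "c2 \<ge> 1")
    case True
    then show ?thesis unfolding has_gen_def using h
      by (intro exI[of _ c1] exI[of _ "c2 - 1"]) (auto simp: algebra_simps)
  next
    case False
    then have "c2 = 0" using h by auto
    have "0 \<le> int i * a3" using assms(3) by simp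
    then have "c1 - a2 \<ge> 0 \<and> (0::int) \<ge> 0 \<and> x + int i * a3 = 0 * a2 + (c1 - a2) \<and> (c1 - a2) + 0 \<le> n + int i"
      using h assms(2,4) \<open>c2 = 0\<close> by auto
    then show ?thesis unfolding has_gen_def by blast
  qed
qed

theorem lemma2:
  fixes a2 a3 n :: int and p :: nat
  assumes "1 < a2" and "a2 < a3"
    and "stride_generator a2 a3 n p"
  shows "\<exists>x. a3 - a2 \<le> x \<and> x < a3 \<and> \<not> (\<exists>i<p. has_gen a2 a3 n i x)"
proof -
  from assms(3) obtain x0 where x0: "0 \<le> x0" "x0 < a3" "\<not> (\<exists>i<p. has_gen a2 a3 n i x0)"
    unfolding stride_generator_def by blast
  have main: "\<forall>x. nat (a3 - x) = d \<longrightarrow> 0 \<le> x \<longrightarrow> x < a3 \<longrightarrow> \<not> (\<exists>i<p. has_gen a2 a3 n i x)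
     \<longrightarrow> (\<exists>x. a3 - a2 \<le> x \<and> x < a3 \<and> \<not> (\<exists>i<p. has_gen a2 a3 n i x))" for d :: nat
  proof (induction d rule: less_induct)
    case (less d)
    show ?case
    proof (intro allI impI)
      fix x assume pr: "nat (a3 - x) = d" "0 \<le> x" "x < a3" "\<not> (\<exists>i<p. has_gen a2 a3 n i x)"
      show "(\<exists>x. a3 - a2 \<le> x \<and> x < a3 \<and> \<not> (\<exists>i<p. has_gen a2 a3 n i x))"
      proof (cases "a3 - a2 \<le> x")
        case True
        then show "(\<exists>x. a3 - a2 \<le> x \<and> x < a3 \<and> \<not> (\<exists>i<p. has_gen a2 a3 n i x))" using pr by blast
      next
        case False
        have "\<not> (\<exists>i<p. has_gen a2 a3 n i (x + a2))"
          using pr shift_gen[of a2 a3 n _ x] assms by auto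
        moreover have "nat (a3 - (x + a2)) < d" using pr assms(1) False by auto
        ultimately show "(\<exists>x. a3 - a2 \<le> x \<and> x < a3 \<and> \<not> (\<exists>i<p. has_gen a2 a3 n i x))" using less.IH[of "nat (a3 - (x + a2))"] pr assms(1) False by auto
      qed
    qed
  qed
  show ?thesis using main x0 by blast
qed

end
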